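(* Let $(C,M)$ be an instance of 2-SBCM with $|C|=3$ characters and $n\ge 1$ meetings in which no two consecutive meetings of $M$ are equal. Then it has a solution using at most $\lceil n/2\rceil-1$ block crossings.
   Context: A storyline instance is a pair $(C,M)$ where $C=\{1,\dots,k\}$ is a set of characters and $M=[m_1,\dots,m_n]$ is a sequence of meetings with $m_i\subseteq C$; in 2-SBCM every meeting has exactly two characters. A permutation of $C$ lists each character exactly once. For $1\le a\le b<c\le k$, the block crossing $(a,b,c)$ maps $\langle \pi_1,\dots,\pi_k\rangle$ to $\langle \pi_1,\dots,\pi_{a-1},\pi_{b+1},\dots,\pi_c,\pi_a,\dots,\pi_b,\pi_{c+1},\dots,\pi_k\rangle$. A meeting fits (is supported by) a permutation if its characters occupy consecutive positions. A solution is a start permutation $\pi^0$ and sequences $B_1,\dots,B_n$ of block crossings (possibly empty) such that, with $\pi^i$ obtained by applying $B_i$ in order to $\pi^{i-1}$, $\pi^i$ supports $m_i$ for all $i$; its number of block crossings is $\sum_i|B_i|$. *)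

theory Defs
  imports Complex_Main
begin

definition is_perm :: "nat \<Rightarrow> nat list \<Rightarrow> bool" where
  "is_perm k \<pi> \<longleftrightarrow> distinct \<pi> \<and> set \<pi> = {1..k}"

definition valid_bc :: "nat \<Rightarrow> nat \<times> nat \<times> nat \<Rightarrow> bool" where
  "valid_bc k t = (case t of (a,b,c) \<Rightarrow> 1 \<le> a \<and> a \<le> b \<and> b < c \<and> c \<le> k)"

text \<open>(a,b,c) maps pi_1..pi_k to pi_1..pi_{a-1}, pi_{b+1}..pi_c, pi_a..pi_b, pi_{c+1}..pi_k
  (positions 1-based, list indices 0-based).\<close>
definition apply_bc :: "nat \<times> nat \<times> nat \<Rightarrow> 'a list \<Rightarrow> 'a list" where
  "apply_bc t \<pi> = (case t of (a,b,c) \<Rightarrow>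
     take (a - 1) \<pi> @ take (c - b) (drop b \<pi>) @ take (b - a + 1) (drop (a - 1) \<pi>) @ drop c \<pi>)"

definition supports :: "'a list \<Rightarrow> 'a set \<Rightarrow> bool" where
  "supports \<pi> m \<longleftrightarrow> (\<exists>i j. i \<le> j \<and> j < length \<pi> \<and> set (take (j - i + 1) (drop i \<pi>)) = m)"

text \<open>Permutation after meeting i (0-based): apply B_1, ..., B_{i+1} in order to pi0.\<close>
definition perm_after :: "nat list \<Rightarrow> (nat \<times> nat \<times> nat) list list \<Rightarrow> nat \<Rightarrow> nat list" where
  "perm_after \<pi>0 Bs i = fold apply_bc (concat (take (Suc i) Bs)) \<pi>0"

definition is_solution :: "nat \<Rightarrow> nat set list \<Rightarrow> nat list \<Rightarrow> (nat \<times> nat \<times> nat) list list \<Rightarrow> bool" where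
  "is_solution k M \<pi>0 Bs \<longleftrightarrow> is_perm k \<pi>0 \<and> length Bs = length M \<and>
     (\<forall>B\<in>set Bs. \<forall>t\<in>set B. valid_bc k t) \<and>
     (\<forall>i<length M. supports (perm_after \<pi>0 Bs i) (M ! i))"

definition num_bc :: "(nat \<times> nat \<times> nat) list list \<Rightarrow> nat" where
  "num_bc Bs = sum_list (map length Bs)"

end

theory Submission
  imports Defs
begin
lemma sup_l: "supports [x,y,z] {x,y}"
  unfolding supports_def by (rule exI[of _ 0], rule exI[of _ 1]) simp
lemma sup_r: "supports [x,y,z] {y,z}"
  unfolding supports_def by (rule exI[of _ 1], rule exI[of _ 2]) (simp add: numeral_eq_Suc)
lemma mid_sup: "(m = {a,b} \<or> m = {b,a}) \<Longrightarrow> a = x \<or> a = y \<Longrightarrow> supports [x,b,y] m"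
  using sup_l[of x b y] sup_r[of x b y] by (auto simp: insert_commute)
lemma mid: assumes "distinct [p1,p2,p3::nat]" "b \<in> {p1,p2,p3}"
  shows "\<exists>B x y. length B \<le> 1 \<and> (\<forall>t\<in>set B. valid_bc 3 t) \<and> fold apply_bc B [p1,p2,p3] = [x,b,y]
     \<and> distinct [x,b,y] \<and> {x,b,y} = {p1,p2,p3}"
proof -
  consider "b = p1" | "b = p2" | "b = p3" using assms by auto
  then show ?thesis
  proof cases
    case 1 then show ?thesis using assms
      by (intro exI[of _ "[(1,1,2)]"] exI[of _ p2] exI[of _ p3])
        (auto simp: valid_bc_def apply_bc_def numeral_eq_Suc)
  next
    case 2 then show ?thesis using assms
      by (intro exI[of _ "[]"] exI[of _ p1] exI[of _ p3]) auto
  next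
    case 3 then show ?thesis using assms
      by (intro exI[of _ "[(2,2,3)]"] exI[of _ p1] exI[of _ p2])
        (auto simp: valid_bc_def apply_bc_def numeral_eq_Suc)
  qed
qed
lemma pairs: "m \<subseteq> {1..3::nat} \<and> card m = 2 \<Longrightarrow> m = {1,2} \<or> m = {1,3} \<or> m = {2,3}"
proof -
  assume h: "m \<subseteq> {1..3::nat} \<and> card m = 2"
  then obtain x y where xy: "m = {x,y}" "x \<noteq> y" by (auto simp: card_2_iff)
  have "x \<in> {1,2,3}" "y \<in> {1,2,3}" using h xy by auto
  then show ?thesis using xy by (auto simp: insert_commute)
qed
lemma perm3: "is_perm 3 \<pi> \<Longrightarrow> \<exists>p1 p2 p3. \<pi> = [p1,p2,p3] \<and> distinct [p1,p2,p3] \<and> {p1,p2,p3} = {1,2,3::nat}"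
proof -
  assume h: "is_perm 3 \<pi>"
  have "length \<pi> = card (set \<pi>)" using h unfolding is_perm_def by (metis distinct_card)
  also have "\<dots> = 3" using h unfolding is_perm_def by simp
  finally have len: "length \<pi> = 3" .
  have e: "\<pi> = [\<pi>!0, \<pi>!1, \<pi>!2]"
  proof (rule nth_equalityI)
    show "length \<pi> = length [\<pi>!0, \<pi>!1, \<pi>!2]" using len by simp
    fix i assume "i < length \<pi>"
    then have "i = 0 \<or> i = 1 \<or> i = 2" using len by linarith
    then show "\<pi> ! i = [\<pi>!0, \<pi>!1, \<pi>!2] ! i" by auto
  qed
  have s: "{1..3::nat} = {1,2,3}" by auto
  have "distinct [\<pi>!0, \<pi>!1, \<pi>!2]" "{\<pi>!0, \<pi>!1, \<pi>!2} = {1,2,3::nat}"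
    using h e s unfolding is_perm_def by (metis, metis list.set(1) list.set(2))
  then show ?thesis using e by blast
qed

lemma step2_gen:
  assumes "distinct [a,b,c::nat]" "{a,b,c} = {1,2,3}" "is_perm 3 \<pi>"
    "m = {a,b} \<or> m = {b,a}" "m' = {c,b} \<or> m' = {b,c}"
  shows "\<exists>B. length B \<le> 1 \<and> (\<forall>t\<in>set B. valid_bc 3 t) \<and> is_perm 3 (fold apply_bc B \<pi>)
     \<and> supports (fold apply_bc B \<pi>) m \<and> supports (fold apply_bc B \<pi>) m'"
proof -
  obtain p1 p2 p3 where p: "\<pi> = [p1,p2,p3]" "distinct [p1,p2,p3]" "{p1,p2,p3} = {1,2,3::nat}"
    using perm3[OF assms(3)] by blast
  have "b \<in> {p1,p2,p3}" using p assms by auto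
  then obtain B x y where B: "length B \<le> 1" "\<forall>t\<in>set B. valid_bc 3 t" "fold apply_bc B [p1,p2,p3] = [x,b,y]"
     "distinct [x,b,y]" "{x,b,y} = {p1,p2,p3}"
    using mid[OF p(2)] by blast
  have xy: "(x = a \<and> y = c) \<or> (x = c \<and> y = a)"
  proof -
    have S: "{x,b,y} = {a,b,c}" using B(5) p(3) assms(2) by simp
    have "x \<in> {a,b,c}" "y \<in> {a,b,c}" using S by (metis insertI1, metis insertI1 insertI2)
    moreover have "x \<noteq> b" "y \<noteq> b" "x \<noteq> y" using B(4) by auto
    moreover have "a \<in> {x,b,y}" using S by blast
    ultimately show ?thesis using assms(1) by auto
  qed
  have s1: "supports [x,b,y] m" using mid_sup[of m a b x y] assms(4) xy by auto
  have s2: "supports [x,b,y] m'" using mid_sup[of m' c b x y] assms(5) xy by auto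
  have "{1..3::nat} = {1,2,3}" by auto
  then have "is_perm 3 [x,b,y]" using B(4,5) p(3) unfolding is_perm_def by simp
  then show ?thesis using B s1 s2 p(1) by metis
qed

definition pair :: "nat set \<Rightarrow> bool" where "pair m \<longleftrightarrow> m \<subseteq> {1..3} \<and> card m = 2"

lemma step2:
  assumes "is_perm 3 \<pi>" "pair m" "pair m'" "m \<noteq> m'"
  shows "\<exists>B. length B \<le> 1 \<and> (\<forall>t\<in>set B. valid_bc 3 t) \<and> is_perm 3 (fold apply_bc B \<pi>)
     \<and> supports (fold apply_bc B \<pi>) m \<and> supports (fold apply_bc B \<pi>) m'"
proof -
  have hm: "m = {1,2} \<or> m = {1,3} \<or> m = {2,3}" using pairs assms(2) unfolding pair_def by blast
  have hm': "m' = {1,2} \<or> m' = {1,3} \<or> m' = {2,3}" using pairs assms(3) unfolding pair_def by blast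
  show ?thesis
  using hm
  proof (elim disjE)
    assume "m = {1,2}"
    show ?thesis using hm'
    proof (elim disjE)
      assume "m' = {1,2}" then show ?thesis using \<open>m = {1,2}\<close> assms(4) by simp
    next
      assume h': "m' = {1,3}" then show ?thesis using \<open>m = {1,2}\<close> step2_gen[of 2 1 3 \<pi> m m', OF _ _ assms(1)] by (simp add: insert_commute)
    next
      assume h': "m' = {2,3}" then show ?thesis using \<open>m = {1,2}\<close> step2_gen[of 1 2 3 \<pi> m m', OF _ _ assms(1)] by (simp add: insert_commute)
    qed
  next
    assume "m = {1,3}"
    show ?thesis using hm'
    proof (elim disjE)
      assume h': "m' = {1,2}" then show ?thesis using \<open>m = {1,3}\<close> step2_gen[of 3 1 2 \<pi> m m', OF _ _ assms(1)] by (simp add: insert_commute)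
    next
      assume "m' = {1,3}" then show ?thesis using \<open>m = {1,3}\<close> assms(4) by simp
    next
      assume h': "m' = {2,3}" then show ?thesis using \<open>m = {1,3}\<close> step2_gen[of 1 3 2 \<pi> m m', OF _ _ assms(1)] by (simp add: insert_commute)
    qed
  next
    assume "m = {2,3}"
    show ?thesis using hm'
    proof (elim disjE)
      assume h': "m' = {1,2}" then show ?thesis using \<open>m = {2,3}\<close> step2_gen[of 3 2 1 \<pi> m m', OF _ _ assms(1)] by (simp add: insert_commute)
    next
      assume h': "m' = {1,3}" then show ?thesis using \<open>m = {2,3}\<close> step2_gen[of 2 3 1 \<pi> m m', OF _ _ assms(1)] by (simp add: insert_commute)
    next
      assume "m' = {2,3}" then show ?thesis using \<open>m = {2,3}\<close> assms(4) by simp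
    qed
  qed
qed

lemma step1:
  assumes "is_perm 3 \<pi>" "pair m"
  shows "\<exists>B. length B \<le> 1 \<and> (\<forall>t\<in>set B. valid_bc 3 t) \<and> is_perm 3 (fold apply_bc B \<pi>)
     \<and> supports (fold apply_bc B \<pi>) m"
proof -
  define m' where "m' = (if m = {1,2} then {1,3} else {1,2::nat})"
  have "pair m'" "m \<noteq> m'" unfolding m'_def pair_def by auto
  then show ?thesis using step2[OF assms \<open>pair m'\<close>] by blast
qed

lemma pa0: "perm_after \<pi> (B#Bs) 0 = fold apply_bc B \<pi>"
  unfolding perm_after_def by simp
lemma paS: "perm_after \<pi> (B#Bs) (Suc i) = perm_after (fold apply_bc B \<pi>) Bs i"
  unfolding perm_after_def by simp

definition good where
  "good \<pi> M Bs \<longleftrightarrow> length Bs = length M \<and> (\<forall>B\<in>set Bs. \<forall>t\<in>set B. valid_bc 3 t) \<and>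
     (\<forall>i<length M. supports (perm_after \<pi> Bs i) (M ! i))"

lemma Q:
  "(\<forall>m\<in>set M. pair m) \<Longrightarrow> (\<forall>i. Suc i < length M \<longrightarrow> M ! i \<noteq> M ! Suc i) \<Longrightarrow> is_perm 3 \<pi>
   \<Longrightarrow> \<exists>Bs. good \<pi> M Bs \<and> 2 * num_bc Bs \<le> length M + 1"
proof (induction M arbitrary: \<pi> rule: induct_list012)
  case 1
  then show ?case by (intro exI[of _ "[]"]) (simp add: good_def num_bc_def)
next
  case (2 x)
  have "pair x" using "2.prems"(1) by simp
  then obtain B where B: "length B \<le> 1" "\<forall>t\<in>set B. valid_bc 3 t" "supports (fold apply_bc B \<pi>) x"
    using step1[OF "2.prems"(3)] by blast
  show ?case using B
    by (intro exI[of _ "[B]"]) (auto simp: good_def num_bc_def pa0)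
next
  case (3 x y zs)
  have "x \<noteq> y" using "3.prems"(2)[rule_format, of 0] by simp
  then obtain B where B: "length B \<le> 1" "\<forall>t\<in>set B. valid_bc 3 t" "is_perm 3 (fold apply_bc B \<pi>)"
     "supports (fold apply_bc B \<pi>) x" "supports (fold apply_bc B \<pi>) y"
    using step2[OF "3.prems"(3), of x y] "3.prems"(1) by (meson list.set_intros)
  have "\<forall>i. Suc i < length zs \<longrightarrow> zs ! i \<noteq> zs ! Suc i"
  proof (intro allI impI)
    fix i assume "Suc i < length zs"
    then show "zs ! i \<noteq> zs ! Suc i" using "3.prems"(2)[rule_format, of "Suc (Suc i)"] by simp
  qed
  then obtain Bs where Bs: "good (fold apply_bc B \<pi>) zs Bs" "2 * num_bc Bs \<le> length zs + 1"
    using "3.IH"(1)[OF _ _ B(3)] "3.prems"(1) by (meson list.set_intros(2))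
  have "good \<pi> (x#y#zs) (B#[]#Bs)"
    unfolding good_def
  proof (intro conjI allI impI)
    show "length (B # [] # Bs) = length (x # y # zs)" using Bs(1) by (simp add: good_def)
    show "\<forall>B\<in>set (B # [] # Bs). \<forall>t\<in>set B. valid_bc 3 t" using Bs(1) B(2) by (auto simp: good_def)
    fix i assume i: "i < length (x # y # zs)"
    show "supports (perm_after \<pi> (B # [] # Bs) i) ((x # y # zs) ! i)"
    proof (cases i)
      case 0 then show ?thesis using B(4) by (simp add: pa0)
    next
      case (Suc j)
      then show ?thesis
      proof (cases j)
        case 0 then show ?thesis using B(5) Suc by (simp add: paS pa0)
      next
        case (Suc k) then show ?thesis using Bs(1) i \<open>i = Suc j\<close> by (simp add: paS good_def)
      qed
    qed
  qed
  moreover have "2 * num_bc (B#[]#Bs) \<le> length (x#y#zs) + 1"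
    using Bs(2) B(1) by (simp add: num_bc_def)
  ultimately show ?case by blast
qed

lemma arith_fin: "2 * c \<le> L + 1 \<Longrightarrow> real c \<le> real_of_int (ceiling (real (L + 2) / 2)) - 1"
proof -
  assume h: "2 * c \<le> L + 1"
  have "int c + 1 \<le> ceiling (real (L + 2) / 2)"
    unfolding le_ceiling_iff using h by simp
  then show ?thesis by linarith
qed

lemma perm123: "is_perm 3 [1,2,3]" unfolding is_perm_def by auto

theorem lemma5:
  fixes M :: "nat set list"
  assumes "length M \<ge> 1"
    and "\<forall>m\<in>set M. m \<subseteq> {1..3} \<and> card m = 2"
    and "\<forall>i. Suc i < length M \<longrightarrow> M ! i \<noteq> M ! Suc i"
  shows "\<exists>\<pi>0 Bs. is_solution 3 M \<pi>0 Bs \<and>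
           real (num_bc Bs) \<le> real_of_int (ceiling (real (length M) / 2)) - 1"
proof -
  have P: "\<forall>m\<in>set M. pair m" using assms(2) unfolding pair_def by blast
  obtain x ys where M: "M = x # ys" using assms(1) by (cases M) auto
  show ?thesis
  proof (cases ys)
    case Nil
    obtain B where B: "is_perm 3 (fold apply_bc B [1,2,3])" "supports (fold apply_bc B [1,2,3]) x"
      using step1[OF perm123, of x] P M by (meson list.set_intros(1))
    obtain \<pi>0 where p0: "is_perm 3 \<pi>0" "supports \<pi>0 x" using B by blast
    have "is_solution 3 M \<pi>0 [[]]"
      using p0 by (simp add: is_solution_def M Nil perm_after_def)
    moreover have "real (num_bc [[]]) \<le> real_of_int (ceiling (real (length M) / 2)) - 1"
      using M Nil by (simp add: num_bc_def)
    ultimately show ?thesis by blast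
  next
    case (Cons y zs)
    have "x \<noteq> y" using assms(3)[rule_format, of 0] M Cons by simp
    then obtain B where B: "is_perm 3 (fold apply_bc B [1,2,3])"
      "supports (fold apply_bc B [1,2,3]) x" "supports (fold apply_bc B [1,2,3]) y"
      using step2[OF perm123, of x y] P M Cons by (meson list.set_intros)
    obtain \<pi>0 where p0: "is_perm 3 \<pi>0" "supports \<pi>0 x" "supports \<pi>0 y" using B by blast
    have "\<forall>i. Suc i < length zs \<longrightarrow> zs ! i \<noteq> zs ! Suc i"
    proof (intro allI impI)
      fix i assume "Suc i < length zs"
      then show "zs ! i \<noteq> zs ! Suc i" using assms(3)[rule_format, of "Suc (Suc i)"] M Cons by simp
    qed
    then obtain Bs where Bs: "good \<pi>0 zs Bs" "2 * num_bc Bs \<le> length zs + 1"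
      using Q[of zs \<pi>0] P M Cons p0(1) by (meson list.set_intros(2))
    have sol: "is_solution 3 M \<pi>0 ([]#[]#Bs)"
      unfolding is_solution_def
    proof (intro conjI allI impI)
      show "is_perm 3 \<pi>0" using p0(1) .
      show "length ([] # [] # Bs) = length M" using Bs(1) M Cons by (simp add: good_def)
      show "\<forall>B\<in>set ([] # [] # Bs). \<forall>t\<in>set B. valid_bc 3 t" using Bs(1) by (auto simp: good_def)
      fix i assume i: "i < length M"
      show "supports (perm_after \<pi>0 ([] # [] # Bs) i) (M ! i)"
      proof (cases i)
        case 0 then show ?thesis using p0(2) M by (simp add: pa0)
      next
        case (Suc j)
        then show ?thesis
        proof (cases j)
          case 0 then show ?thesis using p0(3) Suc M Cons by (simp add: paS pa0)
        next
          case (Suc k) then show ?thesis using Bs(1) i \<open>i = Suc j\<close> M Cons by (simp add: paS good_def)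
        qed
      qed
    qed
    have "num_bc ([]#[]#Bs) = num_bc Bs" by (simp add: num_bc_def)
    then have "real (num_bc ([]#[]#Bs)) \<le> real_of_int (ceiling (real (length zs + 2) / 2)) - 1"
      using arith_fin[OF Bs(2)] by simp
    moreover have "length M = length zs + 2" using M Cons by simp
    ultimately show ?thesis using sol by metis
  qed
qed
end
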